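(* Let an instance have $D_i>0$ for all $i\in\mathcal D$, and let $x$ be a minimum cost assignment in which every demand is entirely assigned to exactly one FC: for each $i$ there is a unique $j(i)\in\mathcal F$ with $x_{i\,j(i)}=D_i$ and $x_{ij}=0$ for $j\ne j(i)$. Define the weighted directed graph $\mathcal G_x$ on vertex set $\{r\}\cup\mathcal F\cup\mathcal D$ with: an arc $r\to j$ of weight $0$ for every $j\in\mathcal F$; an arc $j(i)\to i$ of weight $-\ell_{i\,j(i)}$ for every $i\in\mathcal D$; and an arc $i\to j$ of weight $\ell_{ij}$ for every $i\in\mathcal D$ and $j\in\mathcal F$ with $j\ne j(i)$. Then $\mathcal G_x$ has no negative-weight directed cycle. Let $-\beta_j$ (resp. $-\delta_i$) be the minimum weight of a directed path from $r$ to $j$ (resp. to $i$) in $\mathcal G_x$. Then $(x,\beta)$ is an equilibrium solution, $\delta_i=\min_{j}(\ell_{ij}+\beta_j)$ for every $i$, and for every equilibrium solution $(x',\beta')$ with delays $\delta'_i=\min_j(\ell_{ij}+\beta'_j)$ we have $\delta_i\le\delta'_i$ for all $i\in\mathcal D$. In particular $(x,\beta)$ is a minimum-delay equilibrium solution.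
   Context: An instance consists of finite sets $\mathcal D$ (demand nodes) and $\mathcal F$ (FCs), finite nonnegative travel times $\ell_{ij}$, demands $D_i\ge0$ and capacities $C_j\ge0$ with $\sum_iD_i\le\sum_jC_j$. An assignment is $x\in\mathbb R_{\ge0}^{\mathcal D\times\mathcal F}$ with $\sum_jx_{ij}=D_i$ for all $i$ and $\sum_ix_{ij}\le C_j$ for all $j$; a minimum cost assignment minimizes $\sum_{ij}\ell_{ij}x_{ij}$. An equilibrium solution is a pair $(x,\beta)$ with $x$ an assignment and $\beta\in\mathbb R^{\mathcal F}_{\ge0}$ such that $x_{ij}>0$ only if $j\in\arg\min_{j'}(\ell_{ij'}+\beta_{j'})$, and $\beta_j=0$ whenever $\sum_ix_{ij}<C_j$. The delay of demand $i$ is $\delta_i=\min_j(\ell_{ij}+\beta_j)$ and the delay of the solution is $\sum_iD_i\delta_i$. *)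

theory Defs
  imports Complex_Main
begin

text \<open>Demand nodes form a finite set Dm of type 'd, FCs a finite set F of type 'f.
  l i j is the travel time, D i the demand, C j the capacity.
  An assignment x is a function 'd => 'f => real, only its values on Dm x F matter.\<close>

definition is_assignment ::
  "'d set \<Rightarrow> 'f set \<Rightarrow> ('d \<Rightarrow> real) \<Rightarrow> ('f \<Rightarrow> real) \<Rightarrow> ('d \<Rightarrow> 'f \<Rightarrow> real) \<Rightarrow> bool" where
  "is_assignment Dm F D C x \<longleftrightarrow>
     (\<forall>i\<in>Dm. \<forall>j\<in>F. 0 \<le> x i j) \<and>
     (\<forall>i\<in>Dm. (\<Sum>j\<in>F. x i j) = D i) \<and>
     (\<forall>j\<in>F. (\<Sum>i\<in>Dm. x i j) \<le> C j)"

definition assignment_cost ::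
  "'d set \<Rightarrow> 'f set \<Rightarrow> ('d \<Rightarrow> 'f \<Rightarrow> real) \<Rightarrow> ('d \<Rightarrow> 'f \<Rightarrow> real) \<Rightarrow> real" where
  "assignment_cost Dm F l x = (\<Sum>i\<in>Dm. \<Sum>j\<in>F. l i j * x i j)"

definition is_min_cost_assignment ::
  "'d set \<Rightarrow> 'f set \<Rightarrow> ('d \<Rightarrow> 'f \<Rightarrow> real) \<Rightarrow> ('d \<Rightarrow> real) \<Rightarrow> ('f \<Rightarrow> real)
     \<Rightarrow> ('d \<Rightarrow> 'f \<Rightarrow> real) \<Rightarrow> bool" where
  "is_min_cost_assignment Dm F l D C x \<longleftrightarrow>
     is_assignment Dm F D C x \<and>
     (\<forall>y. is_assignment Dm F D C y \<longrightarrow> assignment_cost Dm F l x \<le> assignment_cost Dm F l y)"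

definition is_equilibrium ::
  "'d set \<Rightarrow> 'f set \<Rightarrow> ('d \<Rightarrow> 'f \<Rightarrow> real) \<Rightarrow> ('d \<Rightarrow> real) \<Rightarrow> ('f \<Rightarrow> real)
     \<Rightarrow> ('d \<Rightarrow> 'f \<Rightarrow> real) \<Rightarrow> ('f \<Rightarrow> real) \<Rightarrow> bool" where
  "is_equilibrium Dm F l D C x \<beta> \<longleftrightarrow>
     is_assignment Dm F D C x \<and>
     (\<forall>j\<in>F. 0 \<le> \<beta> j) \<and>
     (\<forall>i\<in>Dm. \<forall>j\<in>F. 0 < x i j \<longrightarrow> (\<forall>j'\<in>F. l i j + \<beta> j \<le> l i j' + \<beta> j')) \<and>
     (\<forall>j\<in>F. (\<Sum>i\<in>Dm. x i j) < C j \<longrightarrow> \<beta> j = 0)"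

definition delay :: "'f set \<Rightarrow> ('d \<Rightarrow> 'f \<Rightarrow> real) \<Rightarrow> ('f \<Rightarrow> real) \<Rightarrow> 'd \<Rightarrow> real" where
  "delay F l \<beta> i = Min ((\<lambda>j. l i j + \<beta> j) ` F)"

definition solution_delay ::
  "'d set \<Rightarrow> 'f set \<Rightarrow> ('d \<Rightarrow> 'f \<Rightarrow> real) \<Rightarrow> ('d \<Rightarrow> real) \<Rightarrow> ('f \<Rightarrow> real) \<Rightarrow> real" where
  "solution_delay Dm F l D \<beta> = (\<Sum>i\<in>Dm. D i * delay F l \<beta> i)"

text \<open>A weighted digraph (without parallel arcs) is given by a partial weight function:
  A u v = Some w iff there is an arc u -> v, of weight w.\<close>

type_synonym 'v wdigraph = "'v \<Rightarrow> 'v \<Rightarrow> real option"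

definition is_walk :: "'v wdigraph \<Rightarrow> 'v list \<Rightarrow> bool" where
  "is_walk A vs \<longleftrightarrow> vs \<noteq> [] \<and> (\<forall>k < length vs - 1. A (vs ! k) (vs ! Suc k) \<noteq> None)"

definition walk_weight :: "'v wdigraph \<Rightarrow> 'v list \<Rightarrow> real" where
  "walk_weight A vs = (\<Sum>k < length vs - 1. the (A (vs ! k) (vs ! Suc k)))"

definition is_path :: "'v wdigraph \<Rightarrow> 'v \<Rightarrow> 'v \<Rightarrow> 'v list \<Rightarrow> bool" where
  "is_path A u v vs \<longleftrightarrow> is_walk A vs \<and> hd vs = u \<and> last vs = v \<and> distinct vs"

definition is_cycle :: "'v wdigraph \<Rightarrow> 'v list \<Rightarrow> bool" where
  "is_cycle A vs \<longleftrightarrow> is_walk A vs \<and> 2 \<le> length vs \<and> hd vs = last vs \<and> distinct (tl vs)"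

definition no_negative_cycle :: "'v wdigraph \<Rightarrow> bool" where
  "no_negative_cycle A \<longleftrightarrow> (\<forall>vs. is_cycle A vs \<longrightarrow> 0 \<le> walk_weight A vs)"

definition min_path_weight :: "'v wdigraph \<Rightarrow> 'v \<Rightarrow> 'v \<Rightarrow> real" where
  "min_path_weight A u v = Min {walk_weight A p | p. is_path A u v p}"

datatype ('d, 'f) gvertex = Root | FC 'f | Dem 'd

text \<open>The graph G_x, where js i is the unique FC j(i) serving demand i.\<close>
definition Gx :: "'d set \<Rightarrow> 'f set \<Rightarrow> ('d \<Rightarrow> 'f \<Rightarrow> real) \<Rightarrow> ('d \<Rightarrow> 'f)
    \<Rightarrow> ('d, 'f) gvertex wdigraph" where
  "Gx Dm F l js u v =
     (case (u, v) of
        (Root, FC j) \<Rightarrow> if j \<in> F then Some 0 else None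
      | (FC j, Dem i) \<Rightarrow> if i \<in> Dm \<and> j = js i then Some (- l i j) else None
      | (Dem i, FC j) \<Rightarrow> if i \<in> Dm \<and> j \<in> F \<and> j \<noteq> js i then Some (l i j) else None
      | _ \<Rightarrow> None)"

end

theory Submission
  imports Defs
begin


lemma is_walk_single[simp]: "is_walk A [v]" by (simp add: is_walk_def)
lemma walk_weight_single[simp]: "walk_weight A [v] = 0" by (simp add: walk_weight_def)

lemma is_walk_Cons2: "is_walk A (u # v # vs) \<longleftrightarrow> A u v \<noteq> None \<and> is_walk A (v # vs)"
  unfolding is_walk_def by (simp add: All_less_Suc2)

lemma walk_weight_Cons2: "walk_weight A (u # v # vs) = the (A u v) + walk_weight A (v # vs)"
  unfolding walk_weight_def by (simp only: length_Cons diff_Suc_1 sum.lessThan_Suc_shift nth_Cons_Suc nth_Cons_0)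

lemma is_walk_snoc: "xs \<noteq> [] \<Longrightarrow> is_walk A (xs @ [v]) \<longleftrightarrow> is_walk A xs \<and> A (last xs) v \<noteq> None"
proof (induction xs rule: list_nonempty_induct)
  case (single x) then show ?case by (simp add: is_walk_Cons2)
next
  case (cons x xs) then show ?case by (cases xs) (auto simp: is_walk_Cons2)
qed

lemma walk_weight_snoc: "xs \<noteq> [] \<Longrightarrow> walk_weight A (xs @ [v]) = walk_weight A xs + the (A (last xs) v)"
proof (induction xs rule: list_nonempty_induct)
  case (single x) then show ?case by (simp add: walk_weight_Cons2)
next
  case (cons x xs) then show ?case by (cases xs) (auto simp: walk_weight_Cons2)
qed

lemma is_walk_append: "xs \<noteq> [] \<Longrightarrow> is_walk A (xs @ v # ys) \<longleftrightarrow> is_walk A (xs @ [v]) \<and> is_walk A (v # ys)"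
proof (induction xs rule: list_nonempty_induct)
  case (single x) then show ?case by (simp add: is_walk_Cons2)
next
  case (cons x xs) then show ?case by (cases xs) (auto simp: is_walk_Cons2)
qed

lemma walk_weight_append: "walk_weight A (xs @ v # ys) = walk_weight A (xs @ [v]) + walk_weight A (v # ys)"
proof (induction xs rule: induct_list012)
  case (3 x y zs) then show ?case by (simp add: walk_weight_Cons2)
qed (auto simp: walk_weight_Cons2)

lemma walk_potential:
  assumes "is_walk A vs" "\<And>u v w. A u v = Some w \<Longrightarrow> \<pi> u \<le> \<pi> v + w"
  shows "\<pi> (hd vs) - \<pi> (last vs) \<le> walk_weight A vs"
  using assms(1)
proof (induction vs rule: induct_list012)
  case 1 then show ?case by (simp add: is_walk_def)
next
  case (2 x) then show ?case by simp
next
  case (3 x y zs)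
  then have w: "is_walk A (y # zs)" and a: "A x y \<noteq> None" by (auto simp: is_walk_Cons2)
  then obtain w where "A x y = Some w" by auto
  with assms(2) have "\<pi> x \<le> \<pi> y + the (A x y)" by auto
  with 3(2)[OF w] show ?case by (simp add: walk_weight_Cons2)
qed




definition shiftx :: "('d \<Rightarrow> 'f \<Rightarrow> real) \<Rightarrow> ('d,'f) gvertex list \<Rightarrow> real \<Rightarrow> 'd \<Rightarrow> 'f \<Rightarrow> real" where
  "shiftx x vs e i j = x i j + e * (\<Sum>k<length vs - 1.
      (if vs!k = Dem i \<and> vs!Suc k = FC j then 1 else 0) - (if vs!k = FC j \<and> vs!Suc k = Dem i then 1 else 0))"

locale inst =
  fixes Dm :: "'d set" and F :: "'f set" and l :: "'d \<Rightarrow> 'f \<Rightarrow> real" and D :: "'d \<Rightarrow> real"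
    and C :: "'f \<Rightarrow> real" and x :: "'d \<Rightarrow> 'f \<Rightarrow> real" and js :: "'d \<Rightarrow> 'f"
  assumes finD: "finite Dm" and finF: "finite F"
    and D_pos: "\<forall>i\<in>Dm. 0 < D i"
    and mincost: "is_min_cost_assignment Dm F l D C x"
    and single: "\<forall>i\<in>Dm. js i \<in> F \<and> x i (js i) = D i \<and> (\<forall>j\<in>F. j \<noteq> js i \<longrightarrow> x i j = 0)"
begin

abbreviation "G \<equiv> Gx Dm F l js"

lemma arc_cases:
  assumes "G u v = Some w"
  shows "(\<exists>j\<in>F. u = Root \<and> v = FC j \<and> w = 0) \<or> (\<exists>i\<in>Dm. u = FC (js i) \<and> v = Dem i \<and> w = - l i (js i))
     \<or> (\<exists>i\<in>Dm. \<exists>j\<in>F. j \<noteq> js i \<and> u = Dem i \<and> v = FC j \<and> w = l i j)"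
  using assms by (cases u; cases v; auto simp: Gx_def split: if_splits)

lemma arc_cost:
  assumes "G u v = Some w"
  shows "(\<Sum>i\<in>Dm. \<Sum>j\<in>F. l i j * ((if u = Dem i \<and> v = FC j then 1 else 0) - (if u = FC j \<and> v = Dem i then 1 else 0))) = w"
proof -
  have d: "(\<Sum>i\<in>Dm. \<Sum>j\<in>F. l i j * (if i = a \<and> j = b then 1 else 0)) = l a b"
    if "a \<in> Dm" "b \<in> F" for a b
  proof -
    have "(\<Sum>i\<in>Dm. \<Sum>j\<in>F. l i j * (if i = a \<and> j = b then 1 else 0))
        = (\<Sum>i\<in>Dm. if i = a then (\<Sum>j\<in>F. if j = b then l i j else 0) else 0)"
      by (intro sum.cong refl) (auto intro: sum.cong)
    also have "\<dots> = l a b" using that finD finF by simp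
    finally show ?thesis .
  qed
  from arc_cases[OF assms] show ?thesis
  proof (elim disjE bexE conjE)
    fix j assume "u = Root" "v = FC j" "w = 0" then show ?thesis by simp
  next
    fix i0 assume h: "i0 \<in> Dm" "u = FC (js i0)" "v = Dem i0" "w = - l i0 (js i0)"
    have "(\<Sum>i\<in>Dm. \<Sum>j\<in>F. l i j * ((if u = Dem i \<and> v = FC j then 1 else 0) - (if u = FC j \<and> v = Dem i then 1 else 0)))
       = - (\<Sum>i\<in>Dm. \<Sum>j\<in>F. l i j * (if i = i0 \<and> j = js i0 then 1 else 0))"
      using h by (simp add: sum_negf[symmetric]) (intro sum.cong refl, auto)
    also have "\<dots> = w" using d[of i0 "js i0"] h single by simp
    finally show ?thesis .
  next
    fix i0 j0 assume h: "i0 \<in> Dm" "j0 \<in> F" "u = Dem i0" "v = FC j0" "w = l i0 j0"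
    have "(\<Sum>i\<in>Dm. \<Sum>j\<in>F. l i j * ((if u = Dem i \<and> v = FC j then 1 else 0) - (if u = FC j \<and> v = Dem i then 1 else 0)))
       = (\<Sum>i\<in>Dm. \<Sum>j\<in>F. l i j * (if i = i0 \<and> j = j0 then 1 else 0))"
      using h by (intro sum.cong refl) auto
    also have "\<dots> = w" using d[of i0 j0] h by simp
    finally show ?thesis .
  qed
qed

lemma arc_row:
  assumes "G u v = Some w" "i \<in> Dm"
  shows "(\<Sum>j\<in>F. (if u = Dem i \<and> v = FC j then 1 else 0) - (if u = FC j \<and> v = Dem i then 1 else 0))
     = (if u = Dem i then 1 else 0) - (if v = Dem i then (1::real) else 0)"
  using arc_cases[OF assms(1)] single assms(2)
  by (auto simp: sum_subtractf finD finF)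

lemma arc_col:
  assumes "G u v = Some w" "j \<in> F"
  shows "(\<Sum>i\<in>Dm. (if u = Dem i \<and> v = FC j then 1 else 0) - (if u = FC j \<and> v = Dem i then 1 else 0))
     = (if v = FC j then 1 else 0) - (if u = FC j then 1 else 0) - (if u = Root \<and> v = FC j then (1::real) else 0)"
  using arc_cases[OF assms(1)] single assms(2)
  by (auto simp: sum_subtractf finD finF)

lemma walk_arc:
  assumes "is_walk G vs" "k < length vs - 1"
  obtains w where "G (vs!k) (vs!Suc k) = Some w"
  using assms unfolding is_walk_def by auto

lemma shift_props:
  assumes w: "is_walk G vs" and e: "0 < (e::real)" and eD: "\<forall>i\<in>Dm. e * real (length vs - 1) \<le> D i"
    and rows: "\<forall>i\<in>Dm. (hd vs = Dem i) = (last vs = Dem i)"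
    and cols: "\<forall>j\<in>F. (\<Sum>i\<in>Dm. x i j) + e * ((if last vs = FC j then 1 else 0) - (if hd vs = FC j then 1 else 0)) \<le> C j"
  shows "is_assignment Dm F D C (shiftx x vs e)"
    and "assignment_cost Dm F l (shiftx x vs e) = assignment_cost Dm F l x + e * walk_weight G vs"
proof -
  define N where "N = length vs - 1"
  define T where "T k i j = (if vs!k = Dem i \<and> vs!Suc k = FC j then 1 else 0) - (if vs!k = FC j \<and> vs!Suc k = Dem i then 1 else (0::real))" for k i j
  have sx: "shiftx x vs e i j = x i j + e * (\<Sum>k<N. T k i j)" for i j
    unfolding shiftx_def N_def T_def by simp
  have vsne: "vs \<noteq> []" using w by (simp add: is_walk_def)
  have hd0: "hd vs = vs ! 0" using vsne by (simp add: hd_conv_nth)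
  have lastN: "last vs = vs ! N" using vsne by (simp add: last_conv_nth N_def)
  have xa: "is_assignment Dm F D C x" using mincost by (simp add: is_min_cost_assignment_def)
  have "(\<Sum>i\<in>Dm. \<Sum>j\<in>F. l i j * (\<Sum>k<N. T k i j)) = (\<Sum>k<N. \<Sum>i\<in>Dm. \<Sum>j\<in>F. l i j * T k i j)"
    by (simp add: sum_distrib_left sum.swap[of _ "{..<N}"])
  also have "\<dots> = (\<Sum>k<N. the (G (vs!k) (vs!Suc k)))"
  proof (intro sum.cong refl)
    fix k assume "k \<in> {..<N}"
    then obtain ww where a: "G (vs!k) (vs!Suc k) = Some ww" using walk_arc[OF w] by (auto simp: N_def)
    show "(\<Sum>i\<in>Dm. \<Sum>j\<in>F. l i j * T k i j) = the (G (vs!k) (vs!Suc k))"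
      using arc_cost[OF a] a by (simp add: T_def)
  qed
  also have "\<dots> = walk_weight G vs" by (simp add: walk_weight_def N_def)
  finally have c1: "(\<Sum>i\<in>Dm. \<Sum>j\<in>F. l i j * (\<Sum>k<N. T k i j)) = walk_weight G vs" .
  show "assignment_cost Dm F l (shiftx x vs e) = assignment_cost Dm F l x + e * walk_weight G vs"
    unfolding assignment_cost_def sx c1[symmetric]
    by (simp add: distrib_left sum.distrib sum_distrib_left mult.left_commute)
  have row: "(\<Sum>j\<in>F. shiftx x vs e i j) = D i" if i: "i \<in> Dm" for i
  proof -
    have "(\<Sum>j\<in>F. \<Sum>k<N. T k i j) = (\<Sum>k<N. \<Sum>j\<in>F. T k i j)" by (rule sum.swap)
    also have "\<dots> = (\<Sum>k<N. (if vs!k = Dem i then 1 else 0) - (if vs!Suc k = Dem i then 1 else (0::real)))"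
    proof (intro sum.cong refl)
      fix k assume "k \<in> {..<N}"
      then obtain ww where a: "G (vs!k) (vs!Suc k) = Some ww" using walk_arc[OF w] by (auto simp: N_def)
      show "(\<Sum>j\<in>F. T k i j) = (if vs!k = Dem i then 1 else 0) - (if vs!Suc k = Dem i then 1 else (0::real))"
        using arc_row[OF a i] by (simp add: T_def)
    qed
    also have "\<dots> = (if vs!0 = Dem i then 1 else 0) - (if vs!N = Dem i then 1 else (0::real))"
      by (rule sum_lessThan_telescope')
    also have "\<dots> = 0" using rows i hd0 lastN by simp
    finally have "(\<Sum>j\<in>F. \<Sum>k<N. T k i j) = 0" .
    then show ?thesis using xa i unfolding sx is_assignment_def
      by (simp add: sum.distrib sum_distrib_left[symmetric])
  qed
  have col: "(\<Sum>i\<in>Dm. shiftx x vs e i j) \<le> C j" if j: "j \<in> F" for j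
  proof -
    define R where "R k = (if vs!k = Root \<and> vs!Suc k = FC j then 1 else (0::real))" for k
    have "(\<Sum>i\<in>Dm. \<Sum>k<N. T k i j) = (\<Sum>k<N. \<Sum>i\<in>Dm. T k i j)" by (rule sum.swap)
    also have "\<dots> = (\<Sum>k<N. ((if vs!Suc k = FC j then 1 else 0) - (if vs!k = FC j then 1 else (0::real))) - R k)"
    proof (intro sum.cong refl)
      fix k assume "k \<in> {..<N}"
      then obtain ww where a: "G (vs!k) (vs!Suc k) = Some ww" using walk_arc[OF w] by (auto simp: N_def)
      show "(\<Sum>i\<in>Dm. T k i j) = ((if vs!Suc k = FC j then 1 else 0) - (if vs!k = FC j then 1 else (0::real))) - R k"
        using arc_col[OF a j] by (simp add: T_def R_def)
    qed
    also have "\<dots> = ((if vs!N = FC j then 1 else 0) - (if vs!0 = FC j then 1 else (0::real))) - (\<Sum>k<N. R k)"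
      by (simp only: sum_subtractf[of _ R] sum_lessThan_telescope[of "\<lambda>k. if vs!k = FC j then 1 else (0::real)"])
    also have "\<dots> \<le> (if last vs = FC j then 1 else 0) - (if hd vs = FC j then 1 else (0::real))"
      using hd0 lastN by (simp add: sum_nonneg R_def)
    finally have "(\<Sum>i\<in>Dm. \<Sum>k<N. T k i j) \<le> (if last vs = FC j then 1 else 0) - (if hd vs = FC j then 1 else (0::real))" .
    then have "e * (\<Sum>i\<in>Dm. \<Sum>k<N. T k i j) \<le> e * ((if last vs = FC j then 1 else 0) - (if hd vs = FC j then 1 else (0::real)))"
      using e by (intro mult_left_mono) auto
    moreover have "(\<Sum>i\<in>Dm. x i j) + e * ((if last vs = FC j then 1 else 0) - (if hd vs = FC j then 1 else 0)) \<le> C j"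
      using cols j by blast
    ultimately show ?thesis unfolding sx
      by (simp add: sum.distrib sum_distrib_left[symmetric])
  qed
  have nn: "0 \<le> shiftx x vs e i j" if i: "i \<in> Dm" and j: "j \<in> F" for i j
  proof -
    define B where "B k = (if vs!k = FC j \<and> vs!Suc k = Dem i then 1 else (0::real))" for k
    have TB: "- B k \<le> T k i j" for k by (simp add: T_def B_def)
    have sB: "- (\<Sum>k<N. B k) \<le> (\<Sum>k<N. T k i j)"
      using sum_mono[of "{..<N}" "\<lambda>k. - B k" "\<lambda>k. T k i j", OF TB] by (simp add: sum_negf)
    show ?thesis
    proof (cases "j = js i")
      case True
      have "(\<Sum>k<N. B k) \<le> (\<Sum>k<N. 1)" by (intro sum_mono) (simp add: B_def)
      then have "(\<Sum>k<N. B k) \<le> real N" by simp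
      then have "e * (\<Sum>k<N. B k) \<le> e * real N" using e by (intro mult_left_mono) auto
      moreover have "e * real N \<le> D i" using eD i by (simp add: N_def)
      moreover have "x i j = D i" using single i True by simp
      ultimately have "0 \<le> x i j + e * (- (\<Sum>k<N. B k))" by simp
      also have "\<dots> \<le> x i j + e * (\<Sum>k<N. T k i j)" using sB e by (intro add_left_mono mult_left_mono) auto
      finally show ?thesis by (simp add: sx)
    next
      case False
      have "B k = 0" if "k \<in> {..<N}" for k
      proof (rule ccontr)
        assume "B k \<noteq> 0"
        then have h: "vs!k = FC j" "vs!Suc k = Dem i" by (auto simp: B_def split: if_splits)
        have "k < length vs - 1" using that by (simp add: N_def)
        then obtain ww where a: "G (vs!k) (vs!Suc k) = Some ww" using walk_arc[OF w] by blast
        from arc_cases[OF a] h False show False by auto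
      qed
      then have "(\<Sum>k<N. B k) = 0" by simp
      then have "0 \<le> (\<Sum>k<N. T k i j)" using sB by simp
      moreover have "0 \<le> x i j" using xa i j by (simp add: is_assignment_def)
      ultimately show ?thesis using e by (simp add: sx)
    qed
  qed
  show "is_assignment Dm F D C (shiftx x vs e)"
    unfolding is_assignment_def using nn row col by auto
qed

lemma no_neg_closed_walk:
  assumes w: "is_walk G vs" and c: "hd vs = last vs"
  shows "0 \<le> walk_weight G vs"
proof (rule ccontr)
  assume neg: "\<not> 0 \<le> walk_weight G vs"
  define mu where "mu = Min (insert 1 (D ` Dm))"
  have mu_pos: "0 < mu" unfolding mu_def using finD D_pos by (subst Min_gr_iff) auto
  have mu_le: "mu \<le> D i" if "i \<in> Dm" for i unfolding mu_def using finD that by (intro Min_le) auto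
  define e where "e = mu / real (length vs)"
  have len: "0 < length vs" using w by (simp add: is_walk_def)
  have e: "0 < e" using mu_pos len by (simp add: e_def)
  have eD: "\<forall>i\<in>Dm. e * real (length vs - 1) \<le> D i"
  proof
    fix i assume "i \<in> Dm"
    have "e * real (length vs - 1) \<le> e * length vs" using e by (intro mult_left_mono) auto
    also have "\<dots> = mu" using len by (simp add: e_def)
    finally show "e * real (length vs - 1) \<le> D i" using mu_le[OF \<open>i \<in> Dm\<close>] by linarith
  qed
  have xa: "is_assignment Dm F D C x" using mincost by (simp add: is_min_cost_assignment_def)
  have cols: "\<forall>j\<in>F. (\<Sum>i\<in>Dm. x i j) + e * ((if last vs = FC j then 1 else 0) - (if hd vs = FC j then 1 else 0)) \<le> C j"
    using c xa by (simp add: is_assignment_def)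
  note sp = shift_props[OF w e eD _ cols]
  have "assignment_cost Dm F l x \<le> assignment_cost Dm F l (shiftx x vs e)"
    using mincost sp(1) c by (simp add: is_min_cost_assignment_def)
  with sp(2) c have "0 \<le> e * walk_weight G vs" by simp
  with e neg show False by (simp add: zero_le_mult_iff)
qed

lemma no_neg_path_slack:
  assumes p: "is_path G Root (FC j) p" and j: "j \<in> F" and sl: "(\<Sum>i\<in>Dm. x i j) < C j"
  shows "0 \<le> walk_weight G p"
proof (rule ccontr)
  assume neg: "\<not> 0 \<le> walk_weight G p"
  have w: "is_walk G p" and h: "hd p = Root" and la: "last p = FC j" using p by (auto simp: is_path_def)
  define mu where "mu = Min (insert (C j - (\<Sum>i\<in>Dm. x i j)) (D ` Dm))"
  have mu_pos: "0 < mu" unfolding mu_def using finD D_pos sl by (subst Min_gr_iff) auto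
  have mu_le: "mu \<le> D i" if "i \<in> Dm" for i unfolding mu_def using finD that by (intro Min_le) auto
  have mu_le2: "mu \<le> C j - (\<Sum>i\<in>Dm. x i j)" unfolding mu_def using finD by (intro Min_le) auto
  define e where "e = mu / real (length p)"
  have len: "0 < length p" using w by (simp add: is_walk_def)
  have e: "0 < e" using mu_pos len by (simp add: e_def)
  have L1: "1 \<le> real (length p)" using len by linarith
  have "mu * 1 \<le> mu * real (length p)" using mu_pos L1 by (intro mult_left_mono) auto
  moreover have "0 < real (length p)" using L1 by linarith
  ultimately have emu: "e \<le> mu" unfolding e_def by (simp only: pos_divide_le_eq mult.commute mult_1_right)
  have eD: "\<forall>i\<in>Dm. e * real (length p - 1) \<le> D i"
  proof
    fix i assume "i \<in> Dm"
    have "e * real (length p - 1) \<le> e * length p" using e by (intro mult_left_mono) auto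
    also have "\<dots> = mu" using len by (simp add: e_def)
    finally show "e * real (length p - 1) \<le> D i" using mu_le[OF \<open>i \<in> Dm\<close>] by linarith
  qed
  have xa: "is_assignment Dm F D C x" using mincost by (simp add: is_min_cost_assignment_def)
  have cols: "\<forall>j'\<in>F. (\<Sum>i\<in>Dm. x i j') + e * ((if last p = FC j' then 1 else 0) - (if hd p = FC j' then 1 else 0)) \<le> C j'"
  proof
    fix j' assume j': "j' \<in> F"
    show "(\<Sum>i\<in>Dm. x i j') + e * ((if last p = FC j' then 1 else 0) - (if hd p = FC j' then 1 else 0)) \<le> C j'"
    proof (cases "j' = j")
      case True then show ?thesis using h la emu mu_le2 by simp
    next
      case False then show ?thesis using h la xa j' by (simp add: is_assignment_def)
    qed
  qed
  have rows: "\<forall>i\<in>Dm. (hd p = Dem i) = (last p = Dem i)" using h la by simp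
  note sp = shift_props[OF w e eD rows cols]
  have "assignment_cost Dm F l x \<le> assignment_cost Dm F l (shiftx x p e)"
    using mincost sp(1) by (simp add: is_min_cost_assignment_def)
  with sp(2) have "0 \<le> e * walk_weight G p" by simp
  with e neg show False by (simp add: zero_le_mult_iff)
qed

lemma walk_vert:
  assumes w: "is_walk G vs" and k: "k < length vs" "0 < k"
  shows "vs ! k \<in> FC ` F \<union> Dem ` Dm"
proof -
  have "k - 1 < length vs - 1" using k by simp
  then obtain ww where a: "G (vs!(k-1)) (vs!Suc (k-1)) = Some ww" using walk_arc[OF w] by blast
  have "Suc (k - 1) = k" using k by simp
  with arc_cases[OF a] show ?thesis using single by auto
qed

lemma paths_finite: "finite {p. is_path G Root v p}"
proof -
  let ?V = "insert Root (FC ` F \<union> Dem ` Dm)"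
  have "{p. is_path G Root v p} \<subseteq> {xs. set xs \<subseteq> ?V \<and> distinct xs}"
  proof (clarsimp)
    fix p assume p: "is_path G Root v p"
    have w: "is_walk G p" and h: "hd p = Root" and d: "distinct p" using p by (auto simp: is_path_def)
    have ne: "p \<noteq> []" using w by (simp add: is_walk_def)
    have "p ! k \<in> ?V" if "k < length p" for k
    proof (cases k)
      case 0 then show ?thesis using h ne by (simp add: hd_conv_nth)
    next
      case (Suc m) then show ?thesis using walk_vert[OF w that] by auto
    qed
    then show "set p \<subseteq> ?V \<and> distinct p" using d by (metis in_set_conv_nth subsetI)
  qed
  moreover have "finite {xs. set xs \<subseteq> ?V \<and> distinct xs}"
    by (rule finite_subset_distinct) (simp add: finD finF)
  ultimately show ?thesis by (rule finite_subset)
qed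

lemma mpw_le: "is_path G Root v p \<Longrightarrow> min_path_weight G Root v \<le> walk_weight G p"
  unfolding min_path_weight_def
  by (rule Min_le) (auto intro: finite_image_set paths_finite)

lemma mpw_attained:
  assumes "is_path G Root v p0"
  obtains p where "is_path G Root v p" "walk_weight G p = min_path_weight G Root v"
proof -
  have fin: "finite {walk_weight G p | p. is_path G Root v p}"
    using finite_image_set[OF paths_finite[of v], of "walk_weight G"] by simp
  have "min_path_weight G Root v \<in> {walk_weight G p | p. is_path G Root v p}"
    unfolding min_path_weight_def using fin assms by (intro Min_in) auto
  then show ?thesis using that by auto
qed

end


context inst begin

lemma G_root: "j \<in> F \<Longrightarrow> G Root (FC j) = Some 0" by (simp add: Gx_def)
lemma G_fd: "i \<in> Dm \<Longrightarrow> G (FC (js i)) (Dem i) = Some (- l i (js i))" by (simp add: Gx_def)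
lemma G_df: "i \<in> Dm \<Longrightarrow> j \<in> F \<Longrightarrow> j \<noteq> js i \<Longrightarrow> G (Dem i) (FC j) = Some (l i j)" by (simp add: Gx_def)
lemma G_to_root: "G u Root = None" by (cases u) (simp_all add: Gx_def)

lemma path_FC: "j \<in> F \<Longrightarrow> is_path G Root (FC j) [Root, FC j]"
  by (simp add: is_path_def is_walk_Cons2 G_root)

lemma P1: "j \<in> F \<Longrightarrow> min_path_weight G Root (FC j) \<le> 0"
  using mpw_le[OF path_FC] by (simp add: walk_weight_Cons2 G_root)

lemma path_Dem: "i \<in> Dm \<Longrightarrow> is_path G Root (Dem i) [Root, FC (js i), Dem i]"
  using single by (simp add: is_path_def is_walk_Cons2 G_root G_fd)

lemma P2: assumes i: "i \<in> Dm"
  shows "min_path_weight G Root (Dem i) = min_path_weight G Root (FC (js i)) - l i (js i)"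
proof (rule antisym)
  have jsF: "js i \<in> F" using single i by simp
  obtain q where q: "is_path G Root (FC (js i)) q" "walk_weight G q = min_path_weight G Root (FC (js i))"
    using mpw_attained[OF path_FC[OF jsF]] by blast
  have qw: "is_walk G q" and qh: "hd q = Root" and ql: "last q = FC (js i)" and qd: "distinct q"
    using q(1) by (auto simp: is_path_def)
  have qne: "q \<noteq> []" using qw by (simp add: is_walk_def)
  have nin: "Dem i \<notin> set q"
  proof
    assume "Dem i \<in> set q"
    then obtain m where m: "m < length q" "q ! m = Dem i" by (auto simp: in_set_conv_nth)
    have m0: "m \<noteq> 0"
    proof
      assume "m = 0" with m qh qne show False by (simp add: hd_conv_nth)
    qed
    have "m - 1 < length q - 1" using m m0 by simp
    then obtain ww where a: "G (q!(m-1)) (q!Suc (m-1)) = Some ww" using walk_arc[OF qw] by blast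
    have "Suc (m-1) = m" using m0 by simp
    with a m have "G (q!(m-1)) (Dem i) = Some ww" by simp
    from arc_cases[OF this] have "q!(m-1) = FC (js i)" by auto
    also have "\<dots> = q ! (length q - 1)" using ql qne by (simp add: last_conv_nth)
    finally have "m - 1 = length q - 1" using qd m by (simp add: nth_eq_iff_index_eq)
    with m m0 show False by simp
  qed
  have "is_path G Root (Dem i) (q @ [Dem i])"
    using qw qh qd nin qne ql G_fd[OF i] by (simp add: is_path_def is_walk_snoc)
  from mpw_le[OF this] show "min_path_weight G Root (Dem i) \<le> min_path_weight G Root (FC (js i)) - l i (js i)"
    using q(2) qne ql G_fd[OF i] by (simp add: walk_weight_snoc)
next
  obtain p where p: "is_path G Root (Dem i) p" "walk_weight G p = min_path_weight G Root (Dem i)"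
    using mpw_attained[OF path_Dem[OF i]] by blast
  have pw: "is_walk G p" and ph: "hd p = Root" and pl: "last p = Dem i" and pd: "distinct p"
    using p(1) by (auto simp: is_path_def)
  have pne: "p \<noteq> []" using pw by (simp add: is_walk_def)
  define q where "q = butlast p"
  have pq: "p = q @ [Dem i]" using pne pl unfolding q_def by (metis append_butlast_last_id)
  have qne: "q \<noteq> []" using pq ph by (cases q) auto
  have qw: "is_walk G q" and a: "G (last q) (Dem i) \<noteq> None" using pw qne by (auto simp: pq is_walk_snoc)
  from a obtain ww where a': "G (last q) (Dem i) = Some ww" by auto
  from arc_cases[OF a'] have lq: "last q = FC (js i)" by auto
  have "is_path G Root (FC (js i)) q" using qw lq qne ph pd by (auto simp: is_path_def pq)
  from mpw_le[OF this] show "min_path_weight G Root (FC (js i)) - l i (js i) \<le> min_path_weight G Root (Dem i)"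
    using p(2) qne lq G_fd[OF i] by (simp add: pq walk_weight_snoc)
qed

lemma P3: assumes i: "i \<in> Dm" and j: "j \<in> F" and jn: "j \<noteq> js i"
  shows "min_path_weight G Root (FC j) \<le> min_path_weight G Root (Dem i) + l i j"
proof -
  obtain p where p: "is_path G Root (Dem i) p" "walk_weight G p = min_path_weight G Root (Dem i)"
    using mpw_attained[OF path_Dem[OF i]] by blast
  have pw: "is_walk G p" and ph: "hd p = Root" and pl: "last p = Dem i" and pd: "distinct p"
    using p(1) by (auto simp: is_path_def)
  have pne: "p \<noteq> []" using pw by (simp add: is_walk_def)
  have a: "G (Dem i) (FC j) = Some (l i j)" using G_df[OF i j jn] .
  show ?thesis
  proof (cases "FC j \<in> set p")
    case False
    have "is_path G Root (FC j) (p @ [FC j])"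
      using pw ph pd False pne pl a by (simp add: is_path_def is_walk_snoc)
    from mpw_le[OF this] show ?thesis using p(2) pne pl a by (simp add: walk_weight_snoc)
  next
    case True
    then obtain xs ys where sp: "p = xs @ FC j # ys" by (meson split_list)
    have xne: "xs \<noteq> []" using sp ph by (cases xs) auto
    have "is_walk G (xs @ FC j # ys)" using pw sp by simp
    then have w1: "is_walk G (xs @ [FC j])" and w2: "is_walk G (FC j # ys)"
      using is_walk_append[OF xne] by blast+
    have hx: "hd (xs @ [FC j]) = Root" using ph xne sp by simp
    have dx: "distinct (xs @ [FC j])" using pd sp by simp
    have "is_path G Root (FC j) (xs @ [FC j])"
      using w1 hx dx by (simp add: is_path_def)
    from mpw_le[OF this] have m1: "min_path_weight G Root (FC j) \<le> walk_weight G (xs @ [FC j])" .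
    have l2: "last (FC j # ys) = Dem i" using pl by (simp add: sp)
    have cw: "is_walk G ((FC j # ys) @ [FC j])" using is_walk_snoc[of "FC j # ys" G "FC j"] w2 l2 a by simp
    have "0 \<le> walk_weight G ((FC j # ys) @ [FC j])"
      by (rule no_neg_closed_walk[OF cw]) simp
    then have "0 \<le> walk_weight G (FC j # ys) + l i j" using walk_weight_snoc[of "FC j # ys" G "FC j"] l2 a by simp
    moreover have "walk_weight G p = walk_weight G (xs @ [FC j]) + walk_weight G (FC j # ys)"
      unfolding sp by (rule walk_weight_append)
    ultimately show ?thesis using m1 p(2) by linarith
  qed
qed

end


context inst begin

lemma gap_eq:
  fixes b :: "'f \<Rightarrow> real" and dl :: "'d \<Rightarrow> real"
  assumes y: "is_assignment Dm F D C y"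
  shows "(\<Sum>i\<in>Dm. \<Sum>j\<in>F. (l i j + b j - dl i) * y i j) + (\<Sum>j\<in>F. b j * (C j - (\<Sum>i\<in>Dm. y i j)))
     = assignment_cost Dm F l y - ((\<Sum>i\<in>Dm. dl i * D i) - (\<Sum>j\<in>F. b j * C j))"
proof -
  have r: "(\<Sum>j\<in>F. y i j) = D i" if "i \<in> Dm" for i using y that by (simp add: is_assignment_def)
  have S: "(\<Sum>i\<in>Dm. \<Sum>j\<in>F. b j * y i j) = (\<Sum>j\<in>F. \<Sum>i\<in>Dm. b j * y i j)" by (rule sum.swap)
  have e1: "(\<Sum>i\<in>Dm. \<Sum>j\<in>F. (l i j + b j - dl i) * y i j)
      = assignment_cost Dm F l y + (\<Sum>i\<in>Dm. \<Sum>j\<in>F. b j * y i j) - (\<Sum>i\<in>Dm. dl i * (\<Sum>j\<in>F. y i j))"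
    unfolding assignment_cost_def
    by (simp add: algebra_simps sum.distrib sum_subtractf sum_distrib_left)
  have e2: "(\<Sum>i\<in>Dm. dl i * (\<Sum>j\<in>F. y i j)) = (\<Sum>i\<in>Dm. dl i * D i)"
    using r by (intro sum.cong refl) simp
  have e3: "(\<Sum>j\<in>F. b j * (C j - (\<Sum>i\<in>Dm. y i j))) = (\<Sum>j\<in>F. b j * C j) - (\<Sum>j\<in>F. \<Sum>i\<in>Dm. b j * y i j)"
    by (simp add: right_diff_distrib sum_subtractf sum_distrib_left)
  show ?thesis using e1 e2 e3 S by simp
qed

lemma delay_le: "i \<in> Dm \<Longrightarrow> j \<in> F \<Longrightarrow> delay F l b i \<le> l i j + b j"
  unfolding delay_def using finF by (intro Min_le) auto

lemma delay_in: "j0 \<in> F \<Longrightarrow> \<exists>j\<in>F. delay F l b i = l i j + b j"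
proof -
  assume "j0 \<in> F"
  then have "Min ((\<lambda>j. l i j + b j) ` F) \<in> (\<lambda>j. l i j + b j) ` F" using finF by (intro Min_in) auto
  then show ?thesis unfolding delay_def by auto
qed

lemma dual:
  assumes eq: "is_equilibrium Dm F l D C x' b" and i: "i \<in> Dm"
  shows "l i (js i) + b (js i) = delay F l b i"
proof -
  define dl where "dl i = delay F l b i" for i
  define gap where "gap y = (\<Sum>i\<in>Dm. \<Sum>j\<in>F. (l i j + b j - dl i) * y i j) + (\<Sum>j\<in>F. b j * (C j - (\<Sum>i\<in>Dm. y i j)))" for y
  have xa': "is_assignment Dm F D C x'" and bnn: "\<forall>j\<in>F. 0 \<le> b j"
    and opt: "\<forall>i\<in>Dm. \<forall>j\<in>F. 0 < x' i j \<longrightarrow> (\<forall>j'\<in>F. l i j + b j \<le> l i j' + b j')"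
    and cs: "\<forall>j\<in>F. (\<Sum>i\<in>Dm. x' i j) < C j \<longrightarrow> b j = 0"
    using eq by (auto simp: is_equilibrium_def)
  have xa: "is_assignment Dm F D C x" using mincost by (simp add: is_min_cost_assignment_def)
  have t1nn: "0 \<le> l i j + b j - dl i" if "i \<in> Dm" "j \<in> F" for i j
    using delay_le[OF that] by (simp add: dl_def)
  have g0: "gap x' = 0"
  proof -
    have "(l i j + b j - dl i) * x' i j = 0" if ij: "i \<in> Dm" "j \<in> F" for i j
    proof (cases "0 < x' i j")
      case True
      obtain j' where j': "j' \<in> F" "dl i = l i j' + b j'" using delay_in[OF ij(2)] by (auto simp: dl_def)
      then have "l i j + b j \<le> dl i" using opt ij True by auto
      with t1nn[OF ij] show ?thesis by simp
    next
      case False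
      then have "x' i j = 0" using xa' ij by (force simp: is_assignment_def)
      then show ?thesis by simp
    qed
    then have a1: "(\<Sum>i\<in>Dm. \<Sum>j\<in>F. (l i j + b j - dl i) * x' i j) = 0" by (auto intro!: sum.neutral)
    have "b j * (C j - (\<Sum>i\<in>Dm. x' i j)) = 0" if "j \<in> F" for j
      using cs xa' that by (cases "(\<Sum>i\<in>Dm. x' i j) < C j") (auto simp: is_assignment_def)
    then have a2: "(\<Sum>j\<in>F. b j * (C j - (\<Sum>i\<in>Dm. x' i j))) = 0" by (auto intro!: sum.neutral)
    show ?thesis unfolding gap_def a1 a2 by simp
  qed
  have "gap x \<le> gap x'"
    using gap_eq[OF xa, of b dl] gap_eq[OF xa', of b dl] mincost xa'
    by (simp add: gap_def is_min_cost_assignment_def)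
  then have gx: "gap x \<le> 0" using g0 by simp
  have n1: "0 \<le> (\<Sum>i\<in>Dm. \<Sum>j\<in>F. (l i j + b j - dl i) * x i j)"
    using t1nn xa by (intro sum_nonneg mult_nonneg_nonneg) (auto simp: is_assignment_def)
  have n2: "0 \<le> (\<Sum>j\<in>F. b j * (C j - (\<Sum>i\<in>Dm. x i j)))"
    using bnn xa by (intro sum_nonneg mult_nonneg_nonneg) (auto simp: is_assignment_def)
  have z: "(\<Sum>i\<in>Dm. \<Sum>j\<in>F. (l i j + b j - dl i) * x i j) = 0" using gx n1 n2 by (simp add: gap_def)
  have inn: "\<forall>i\<in>Dm. 0 \<le> (\<Sum>j\<in>F. (l i j + b j - dl i) * x i j)"
    using t1nn xa by (auto intro!: sum_nonneg mult_nonneg_nonneg simp: is_assignment_def)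
  have "(\<Sum>j\<in>F. (l i j + b j - dl i) * x i j) = 0" using z inn i finD by (simp add: sum_nonneg_eq_0_iff)
  moreover have "\<forall>j\<in>F. 0 \<le> (l i j + b j - dl i) * x i j"
    using t1nn xa i by (auto intro!: mult_nonneg_nonneg simp: is_assignment_def)
  ultimately have "\<forall>j\<in>F. (l i j + b j - dl i) * x i j = 0" using finF by (simp add: sum_nonneg_eq_0_iff)
  then have "(l i (js i) + b (js i) - dl i) * D i = 0" using single i by auto
  moreover have "D i \<noteq> 0" using D_pos i by force
  ultimately show ?thesis by (simp add: dl_def)
qed

end


context inst begin

definition "bt j = - min_path_weight G Root (FC j)"
definition "dt i = - min_path_weight G Root (Dem i)"

lemma bt_nonneg: "j \<in> F \<Longrightarrow> 0 \<le> bt j" using P1 by (simp add: bt_def)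

lemma dt_js: "i \<in> Dm \<Longrightarrow> dt i = l i (js i) + bt (js i)" using P2 by (simp add: dt_def bt_def)

lemma dt_le: "i \<in> Dm \<Longrightarrow> j \<in> F \<Longrightarrow> dt i \<le> l i j + bt j"
  using P3[of i j] dt_js[of i] by (cases "j = js i") (auto simp: dt_def bt_def)

lemma dt_delay: "i \<in> Dm \<Longrightarrow> dt i = delay F l bt i"
  unfolding delay_def
  by (rule Min_eqI[symmetric]) (use finF dt_le dt_js single in auto)

lemma eq_x: "is_equilibrium Dm F l D C x bt"
proof -
  have xa: "is_assignment Dm F D C x" using mincost by (simp add: is_min_cost_assignment_def)
  have c3: "\<forall>i\<in>Dm. \<forall>j\<in>F. 0 < x i j \<longrightarrow> (\<forall>j'\<in>F. l i j + bt j \<le> l i j' + bt j')"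
  proof (intro ballI impI)
    fix i j j' assume i: "i \<in> Dm" and j: "j \<in> F" and pos: "0 < x i j" and j': "j' \<in> F"
    have "j = js i" using single i j pos by force
    then show "l i j + bt j \<le> l i j' + bt j'" using dt_js[OF i] dt_le[OF i j'] by simp
  qed
  have c4: "\<forall>j\<in>F. (\<Sum>i\<in>Dm. x i j) < C j \<longrightarrow> bt j = 0"
  proof (intro ballI impI)
    fix j assume j: "j \<in> F" and sl: "(\<Sum>i\<in>Dm. x i j) < C j"
    obtain p where p: "is_path G Root (FC j) p" "walk_weight G p = min_path_weight G Root (FC j)"
      using mpw_attained[OF path_FC[OF j]] by blast
    have "0 \<le> walk_weight G p" by (rule no_neg_path_slack[OF p(1) j sl])
    then show "bt j = 0" using p(2) bt_nonneg[OF j] by (simp add: bt_def)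
  qed
  show ?thesis unfolding is_equilibrium_def using xa bt_nonneg c3 c4 by auto
qed

lemma bt_le:
  assumes eq: "is_equilibrium Dm F l D C x' b" and j: "j \<in> F"
  shows "bt j \<le> b j"
proof -
  define pi where "pi v = (case v of Root \<Rightarrow> 0 | FC j \<Rightarrow> b j | Dem i \<Rightarrow> delay F l b i)" for v
  have bnn: "\<forall>j\<in>F. 0 \<le> b j" using eq by (simp add: is_equilibrium_def)
  have pot: "pi u \<le> pi v + w" if a: "G u v = Some w" for u v w
    using arc_cases[OF a]
  proof (elim disjE bexE conjE)
    fix j assume "j \<in> F" "u = Root" "v = FC j" "w = 0"
    then show ?thesis using bnn by (simp add: pi_def)
  next
    fix i assume "i \<in> Dm" "u = FC (js i)" "v = Dem i" "w = - l i (js i)"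
    then show ?thesis using dual[OF eq, of i] by (simp add: pi_def)
  next
    fix i j assume "i \<in> Dm" "j \<in> F" "u = Dem i" "v = FC j" "w = l i j"
    then show ?thesis using delay_le[of i j b] by (simp add: pi_def add.commute)
  qed
  obtain p where p: "is_path G Root (FC j) p" "walk_weight G p = min_path_weight G Root (FC j)"
    using mpw_attained[OF path_FC[OF j]] by blast
  have "pi (hd p) - pi (last p) \<le> walk_weight G p"
    using p(1) pot by (intro walk_potential) (auto simp: is_path_def)
  then show ?thesis using p by (simp add: is_path_def pi_def bt_def)
qed

lemma dt_le_delay:
  assumes eq: "is_equilibrium Dm F l D C x' b" and i: "i \<in> Dm"
  shows "dt i \<le> delay F l b i"
proof -
  have "js i \<in> F" using single i by simp
  then obtain j where j: "j \<in> F" "delay F l b i = l i j + b j" using delay_in by blast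
  have "dt i \<le> l i j + bt j" using dt_le[OF i j(1)] .
  also have "\<dots> \<le> l i j + b j" using bt_le[OF eq j(1)] by simp
  finally show ?thesis using j by simp
qed

end

theorem theorem3p4:
  fixes Dm :: "'d set" and F :: "'f set"
    and l :: "'d \<Rightarrow> 'f \<Rightarrow> real" and D :: "'d \<Rightarrow> real" and C :: "'f \<Rightarrow> real"
    and x :: "'d \<Rightarrow> 'f \<Rightarrow> real" and js :: "'d \<Rightarrow> 'f"
    and \<beta> :: "'f \<Rightarrow> real" and \<delta> :: "'d \<Rightarrow> real"
  assumes finD: "finite Dm" and finF: "finite F"
    and l_nonneg: "\<forall>i\<in>Dm. \<forall>j\<in>F. 0 \<le> l i j"
    and D_pos: "\<forall>i\<in>Dm. 0 < D i"
    and C_nonneg: "\<forall>j\<in>F. 0 \<le> C j"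
    and total: "(\<Sum>i\<in>Dm. D i) \<le> (\<Sum>j\<in>F. C j)"
    and mincost: "is_min_cost_assignment Dm F l D C x"
    and single: "\<forall>i\<in>Dm. js i \<in> F \<and> x i (js i) = D i \<and> (\<forall>j\<in>F. j \<noteq> js i \<longrightarrow> x i j = 0)"
    and beta_def: "\<beta> = (\<lambda>j. - min_path_weight (Gx Dm F l js) Root (FC j))"
    and delta_def: "\<delta> = (\<lambda>i. - min_path_weight (Gx Dm F l js) Root (Dem i))"
  shows "no_negative_cycle (Gx Dm F l js)
    \<and> is_equilibrium Dm F l D C x \<beta>
    \<and> (\<forall>i\<in>Dm. \<delta> i = delay F l \<beta> i)
    \<and> (\<forall>x' \<beta>'. is_equilibrium Dm F l D C x' \<beta>' \<longrightarrow> (\<forall>i\<in>Dm. \<delta> i \<le> delay F l \<beta>' i))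
    \<and> (\<forall>x' \<beta>'. is_equilibrium Dm F l D C x' \<beta>' \<longrightarrow>
          solution_delay Dm F l D \<beta> \<le> solution_delay Dm F l D \<beta>')"
proof -
  interpret inst Dm F l D C x js using finD finF D_pos mincost single by unfold_locales
  have b: "\<beta> = bt" using beta_def by (simp add: bt_def fun_eq_iff)
  have d: "\<delta> = dt" using delta_def by (simp add: dt_def fun_eq_iff)
  have nc: "no_negative_cycle (Gx Dm F l js)"
    unfolding no_negative_cycle_def
  proof (intro allI impI)
    fix vs assume "is_cycle (Gx Dm F l js) vs"
    then show "0 \<le> walk_weight (Gx Dm F l js) vs"
      by (intro no_neg_closed_walk) (auto simp: is_cycle_def)
  qed
  have dl: "\<forall>x' \<beta>'. is_equilibrium Dm F l D C x' \<beta>' \<longrightarrow> (\<forall>i\<in>Dm. \<delta> i \<le> delay F l \<beta>' i)"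
    using dt_le_delay d by blast
  have sd: "\<forall>x' \<beta>'. is_equilibrium Dm F l D C x' \<beta>' \<longrightarrow>
          solution_delay Dm F l D \<beta> \<le> solution_delay Dm F l D \<beta>'"
  proof (intro allI impI)
    fix x' \<beta>' assume eq: "is_equilibrium Dm F l D C x' \<beta>'"
    show "solution_delay Dm F l D \<beta> \<le> solution_delay Dm F l D \<beta>'"
      unfolding solution_delay_def
    proof (rule sum_mono)
      fix i assume i: "i \<in> Dm"
      have "delay F l \<beta> i \<le> delay F l \<beta>' i"
        using dt_le_delay[OF eq i] dt_delay[OF i] b by simp
      then show "D i * delay F l \<beta> i \<le> D i * delay F l \<beta>' i"
        using D_pos i by (intro mult_left_mono) auto
    qed
  qed
  show ?thesis using nc eq_x b d dt_delay dl sd by auto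
qed

end
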